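(* Let $\tau$ be a bounded trace on $\mathcal A$ (a bounded linear functional with $\tau(f\#g)=\tau(g\#f)$ for all $f,g\in\mathcal A$). Then $\mathcal J\subseteq\ker\tau$ if and only if $\tau(\delta_e)=0$. Consequently $\tau$ induces (drops to) a bounded trace on $\mathcal A/\mathcal J$ if and only if $\tau(\delta_e)=0$.
   Context: Let $\mathrm{Cu}_2$ be the involutive monoid with identity $e$ and zero element $\lozenge$ (so $\lozenge t=\lozenge=t\lozenge$ for all $t$), generated by $s_1,s_2,s_1^*,s_2^*$ subject to $s_1^*s_1=e=s_2^*s_2$ and $s_1^*s_2=\lozenge=s_2^*s_1$, with involution $t\mapsto t^*$ satisfying $(t^* )^*=t$, $(tu)^*=u^*t^*$. Let $\mathcal A=\ell^1(\mathrm{Cu}_2\setminus\{\lozenge\})$ with product $\#$ determined by bilinearity and continuity from $\delta_s\#\delta_t=\delta_{st}$ if $st\neq\lozenge$ and $\delta_s\#\delta_t=0$ if $st=\lozenge$; this is a unital Banach algebra with unit $\delta_e$. Let $f_0=\delta_e-\delta_{s_1s_1^*}-\delta_{s_2s_2^*}$ and let $\mathcal J$ be the closed two-sided ideal of $\mathcal A$ generated by $f_0$. A trace $\tau$ drops to $\mathcal A/\mathcal J$ if there is a (necessarily bounded trace) $\tau'$ on $\mathcal A/\mathcal J$ with $\tau'\circ\pi_{\mathcal J}=\tau$, $\pi_{\mathcal J}$ being the quotient map. *)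

theory Defs
  imports "HOL-Analysis.Analysis"
begin

datatype gen = S1 | S2

text \<open>Every element of Cu_2 other than the zero is uniquely of the form
  s_mu (s_nu)^* with mu, nu words in {s1,s2}; Elem mu nu denotes it.
  Zero denotes the zero element (lozenge).\<close>
datatype cu2 = Zero | Elem "gen list" "gen list"

fun cu_mult :: "cu2 \<Rightarrow> cu2 \<Rightarrow> cu2" where
  "cu_mult Zero t = Zero"
| "cu_mult s Zero = Zero"
| "cu_mult (Elem mu nu) (Elem al be) =
     (if take (length nu) al = nu then Elem (mu @ drop (length nu) al) be
      else if take (length al) nu = al then Elem mu (be @ drop (length al) nu)
      else Zero)"

fun cu_star :: "cu2 \<Rightarrow> cu2" where
  "cu_star Zero = Zero"
| "cu_star (Elem mu nu) = Elem nu mu"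

definition cu_e :: cu2 where "cu_e = Elem [] []"
definition cu_s1 :: cu2 where "cu_s1 = Elem [S1] []"
definition cu_s2 :: cu2 where "cu_s2 = Elem [S2] []"

lemma cu_relations:
  "cu_mult (cu_star cu_s1) cu_s1 = cu_e" "cu_mult (cu_star cu_s2) cu_s2 = cu_e"
  "cu_mult (cu_star cu_s1) cu_s2 = Zero" "cu_mult (cu_star cu_s2) cu_s1 = Zero"
  by (simp_all add: cu_e_def cu_s1_def cu_s2_def)

definition l1 :: "(cu2 \<Rightarrow> complex) set" where
  "l1 = {f. f Zero = 0 \<and> (\<lambda>s. norm (f s)) summable_on UNIV}"

definition l1norm :: "(cu2 \<Rightarrow> complex) \<Rightarrow> real" where
  "l1norm f = infsum (\<lambda>s. norm (f s)) UNIV"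

definition delta :: "cu2 \<Rightarrow> cu2 \<Rightarrow> complex" where
  "delta s = (\<lambda>t. if t = s \<and> s \<noteq> Zero then 1 else 0)"

definition conv :: "(cu2 \<Rightarrow> complex) \<Rightarrow> (cu2 \<Rightarrow> complex) \<Rightarrow> cu2 \<Rightarrow> complex" where
  "conv f g = (\<lambda>u. if u = Zero then 0
      else infsum (\<lambda>(s, t). f s * g t) {(s, t). cu_mult s t = u})"

definition f0 :: "cu2 \<Rightarrow> complex" where
  "f0 = (\<lambda>t. delta cu_e t - delta (Elem [S1] [S1]) t - delta (Elem [S2] [S2]) t)"

definition closed_ideal :: "(cu2 \<Rightarrow> complex) set \<Rightarrow> bool" where
  "closed_ideal I \<longleftrightarrow>
     I \<subseteq> l1 \<and> (\<lambda>_. 0) \<in> I \<and>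
     (\<forall>f\<in>I. \<forall>g\<in>I. (\<lambda>s. f s + g s) \<in> I) \<and>
     (\<forall>c. \<forall>f\<in>I. (\<lambda>s. c * f s) \<in> I) \<and>
     (\<forall>a\<in>l1. \<forall>f\<in>I. conv a f \<in> I \<and> conv f a \<in> I) \<and>
     (\<forall>f\<in>l1. (\<forall>\<epsilon>>0. \<exists>g\<in>I. l1norm (\<lambda>s. f s - g s) < \<epsilon>) \<longrightarrow> f \<in> I)"

definition J :: "(cu2 \<Rightarrow> complex) set" where
  "J = \<Inter> {I. closed_ideal I \<and> f0 \<in> I}"

definition bounded_trace :: "((cu2 \<Rightarrow> complex) \<Rightarrow> complex) \<Rightarrow> bool" where
  "bounded_trace \<tau> \<longleftrightarrow>
     (\<forall>f\<in>l1. \<forall>g\<in>l1. \<tau> (\<lambda>s. f s + g s) = \<tau> f + \<tau> g) \<and>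
     (\<forall>c. \<forall>f\<in>l1. \<tau> (\<lambda>s. c * f s) = c * \<tau> f) \<and>
     (\<exists>C. \<forall>f\<in>l1. norm (\<tau> f) \<le> C * l1norm f) \<and>
     (\<forall>f\<in>l1. \<forall>g\<in>l1. \<tau> (conv f g) = \<tau> (conv g f))"

definition qmap :: "(cu2 \<Rightarrow> complex) \<Rightarrow> (cu2 \<Rightarrow> complex) set" where
  "qmap f = {(\<lambda>s. f s + j s) | j. j \<in> J}"

definition drops :: "((cu2 \<Rightarrow> complex) \<Rightarrow> complex) \<Rightarrow> bool" where
  "drops \<tau> \<longleftrightarrow> (\<exists>\<tau>'. \<forall>f\<in>l1. \<tau>' (qmap f) = \<tau> f)"

end

theory Submission
  imports Defs
begin


fun rep :: "cu2 \<Rightarrow> gen list \<Rightarrow> gen list option" where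
  "rep Zero w = None"
| "rep (Elem m n) w = (if take (length n) w = n then Some (m @ drop (length n) w) else None)"

lemma take_eq_iff: "take (length n) w = n \<longleftrightarrow> (\<exists>v. w = n @ v)"
  by (metis append_eq_conv_conj)

lemma take_app_cases: "take (length n) (a @ v) = n \<Longrightarrow> take (length n) a = n \<or> take (length a) n = a"
proof (cases "length n \<le> length a")
  case True
  assume "take (length n) (a @ v) = n" then show ?thesis using True by simp
next
  case False
  assume h: "take (length n) (a @ v) = n"
  have "take (length a) n = take (length a) (take (length n) (a @ v))" using h by simp
  also have "\<dots> = take (length a) (a @ v)" using False by (simp add: min_def)
  finally show ?thesis by simp
qed

lemma rep_mult: "rep (cu_mult x y) w = (case rep y w of None \<Rightarrow> None | Some v \<Rightarrow> rep x v)"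
proof (cases x; cases y)
  fix mu nu al be assume [simp]: "x = Elem mu nu" "y = Elem al be"
  show ?thesis
  proof (cases "take (length nu) al = nu")
    case True
    then obtain g where al: "al = nu @ g" by (metis append_take_drop_id)
    show ?thesis by (auto simp: al take_eq_iff)
  next
    case F: False
    show ?thesis
    proof (cases "take (length al) nu = al")
      case True
      then obtain g where nu: "nu = al @ g" by (metis append_take_drop_id)
      show ?thesis
      proof (cases "\<exists>v. w = be @ v")
        case True
        then obtain v where w: "w = be @ v" by blast
        show ?thesis using F by (auto simp: nu w take_eq_iff)
      next
        case False
        then have "take (length be) w \<noteq> be" by (metis append_take_drop_id)
        moreover have "take (length be) w @ take (length g) (drop (length be) w) \<noteq> be @ g"
        proof
          assume e: "take (length be) w @ take (length g) (drop (length be) w) = be @ g"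
          show False
          proof (cases "length be \<le> length w")
            case True
            then show False using e \<open>take (length be) w \<noteq> be\<close> by (simp add: append_eq_append_conv)
          next
            case False
            then have "length (take (length be) w @ take (length g) (drop (length be) w)) < length (be @ g)"
              by simp
            then show False using e by simp
          qed
        qed
        ultimately show ?thesis using F by (auto simp: nu take_add)
      qed
    next
      case False
      then show ?thesis using F take_app_cases[of nu al] by (auto split: option.split)
    qed
  qed
qed auto

lemma rep_inj: "rep x = rep y \<Longrightarrow> x = y"
proof (cases x; cases y)
  fix m n m' n' assume xy: "x = Elem m n" "y = Elem m' n'" and r: "rep x = rep y"
  have 1: "rep y n = Some m" using r xy by (metis rep.simps(2) append_Nil2 drop_all order_refl take_all)
  have 2: "rep x n' = Some m'" using r xy by (metis rep.simps(2) append_Nil2 drop_all order_refl take_all)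
  from 1 2 xy have "take (length n') n = n'" "take (length n) n' = n"
    by (auto split: if_splits)
  then have "n = n'" by (metis length_take min.absorb_iff2 min.commute nle_le take_all)
  then show ?thesis using 1 xy by auto
next
  fix m n assume "x = Elem m n" "y = Zero" "rep x = rep y"
  then have "rep x n = None" by simp
  then show ?thesis using \<open>x = Elem m n\<close> by simp
next
  fix m n assume "x = Zero" "y = Elem m n" "rep x = rep y"
  then have "rep y n = None" by (metis rep.simps(1))
  then show ?thesis using \<open>y = Elem m n\<close> by simp
qed simp

lemma cu_assoc: "cu_mult (cu_mult x y) z = cu_mult x (cu_mult y z)"
  by (rule rep_inj) (auto simp: fun_eq_iff rep_mult split: option.split)



lemma prod_abs_summable:
  fixes a :: "'a \<Rightarrow> complex" and b :: "'b \<Rightarrow> complex"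
  assumes "(\<lambda>x. norm (a x)) summable_on UNIV" "(\<lambda>x. norm (b x)) summable_on UNIV"
  shows "(\<lambda>x. norm ((\<lambda>(s,t). a s * b t) x)) summable_on UNIV"
proof -
  have "(\<lambda>(s,t). norm (a s) * norm (b t)) summable_on Sigma UNIV (\<lambda>_. UNIV)"
  proof (rule summable_on_SigmaI[where g = "\<lambda>s. norm (a s) * infsum (\<lambda>t. norm (b t)) UNIV"])
    fix s :: 'a assume "s \<in> UNIV"
    show "((\<lambda>y. case (s, y) of (s, t) \<Rightarrow> norm (a s) * norm (b t)) has_sum
            norm (a s) * infsum (\<lambda>t. norm (b t)) UNIV) UNIV"
      using has_sum_cmult_right[OF has_sum_infsum[OF assms(2)]] by simp
  next
    show "(\<lambda>s. norm (a s) * infsum (\<lambda>t. norm (b t)) UNIV) summable_on UNIV"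
      using summable_on_cmult_left[OF assms(1)] by simp
  qed auto
  then show ?thesis by (simp add: case_prod_unfold norm_mult)
qed

lemma prod_infsum:
  fixes a :: "'a \<Rightarrow> real" and b :: "'b \<Rightarrow> real"
  assumes "(\<lambda>(s,t). a s * b t) summable_on UNIV" "b summable_on UNIV"
  shows "infsum (\<lambda>(s,t). a s * b t) UNIV = infsum a UNIV * infsum b UNIV"
proof -
  have "infsum (\<lambda>(s,t). a s * b t) (Sigma UNIV (\<lambda>_. UNIV)) = infsum (\<lambda>s. infsum (\<lambda>t. a s * b t) UNIV) UNIV"
    using infsum_Sigma'_banach[of "\<lambda>s t. a s * b t" UNIV "\<lambda>_. UNIV"] assms by simp
  also have "\<dots> = infsum (\<lambda>s. a s * infsum b UNIV) UNIV"
    by (simp add: infsum_cmult_right')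
  also have "\<dots> = infsum a UNIV * infsum b UNIV"
    by (simp add: infsum_cmult_left')
  finally show ?thesis by simp
qed

lemma fiber_abs:
  fixes F :: "'a \<Rightarrow> complex" and h :: "'a \<Rightarrow> 'b"
  assumes F: "(\<lambda>x. norm (F x)) summable_on UNIV"
  shows "(\<lambda>u. norm (infsum F (h -` {u}))) summable_on UNIV"
    and "infsum (\<lambda>u. norm (infsum F (h -` {u}))) UNIV \<le> infsum (\<lambda>x. norm (F x)) UNIV"
proof -
  define N where "N x = norm (F x)" for x
  have im: "(\<lambda>p. (h p, p)) ` UNIV = Sigma UNIV (\<lambda>u. h -` {u})" by auto
  have inj: "inj_on (\<lambda>p. (h p, p)) UNIV" by (auto intro: inj_onI)
  have "(\<lambda>(u,p). N p) summable_on Sigma UNIV (\<lambda>u. h -` {u})"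
    unfolding im[symmetric] using F inj by (subst summable_on_reindex) (auto simp: o_def N_def)
  then have S: "(\<lambda>u. infsum N (h -` {u})) summable_on UNIV"
    and E: "infsum (\<lambda>u. infsum N (h -` {u})) UNIV = infsum (\<lambda>(u,p). N p) (Sigma UNIV (\<lambda>u. h -` {u}))"
    using summable_on_Sigma_banach[of "\<lambda>u p. N p" UNIV "\<lambda>u. h -` {u}"]
          infsum_Sigma'_banach[of "\<lambda>u p. N p" UNIV "\<lambda>u. h -` {u}"] by auto
  have E2: "infsum (\<lambda>(u,p). N p) (Sigma UNIV (\<lambda>u. h -` {u})) = infsum N UNIV"
    unfolding im[symmetric] using inj by (subst infsum_reindex) (auto simp: o_def)
  have le: "norm (infsum F (h -` {u})) \<le> infsum N (h -` {u})" for u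
    unfolding N_def by (rule norm_infsum_bound) (rule summable_on_subset_banach[OF F], auto)
  show "(\<lambda>u. norm (infsum F (h -` {u}))) summable_on UNIV"
    by (rule summable_on_comparison_test[OF S]) (auto simp: le)
  then show "infsum (\<lambda>u. norm (infsum F (h -` {u}))) UNIV \<le> infsum (\<lambda>x. norm (F x)) UNIV"
  proof -
    have NN: "N = (\<lambda>x. norm (F x))" by (rule ext) (simp add: N_def)
    assume "(\<lambda>u. norm (infsum F (h -` {u}))) summable_on UNIV"
    then have "infsum (\<lambda>u. norm (infsum F (h -` {u}))) UNIV \<le> infsum (\<lambda>u. infsum N (h -` {u})) UNIV"
      using infsum_mono[OF _ S le] by blast
    then show ?thesis using E E2 NN by simp
  qed
qed

definition fib :: "cu2 \<Rightarrow> (cu2 \<times> cu2) set" where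
  "fib u = {(s, t). cu_mult s t = u}"

lemma fib_vimage: "fib u = (\<lambda>(s,t). cu_mult s t) -` {u}"
  by (auto simp: fib_def)

lemma conv_fib: "conv f g u = (if u = Zero then 0 else infsum (\<lambda>(s, t). f s * g t) (fib u))"
  by (simp add: conv_def fib_def)


lemma l1norm_nonneg: "l1norm f \<ge> 0"
  unfolding l1norm_def by (rule infsum_nonneg) simp

lemma conv_l1:
  assumes "a \<in> l1" "b \<in> l1"
  shows "conv a b \<in> l1" and "l1norm (conv a b) \<le> l1norm a * l1norm b"
proof -
  define F where "F = (\<lambda>(s,t). a s * b t)"
  have F: "(\<lambda>x. norm (F x)) summable_on UNIV" unfolding F_def by (rule prod_abs_summable) (use assms in \<open>auto simp: l1_def\<close>)
  note fa = fiber_abs[OF F, of "\<lambda>(s,t). cu_mult s t"]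
  have le: "norm (conv a b u) \<le> norm (infsum F ((\<lambda>(s,t). cu_mult s t) -` {u}))" for u
    by (simp add: conv_fib fib_vimage F_def)
  have S: "(\<lambda>u. norm (conv a b u)) summable_on UNIV"
    by (rule summable_on_comparison_test[OF fa(1)]) (auto simp: le)
  show "conv a b \<in> l1" using S by (simp add: l1_def conv_def)
  have "l1norm (conv a b) \<le> infsum (\<lambda>u. norm (infsum F ((\<lambda>(s,t). cu_mult s t) -` {u}))) UNIV"
    unfolding l1norm_def by (rule infsum_mono[OF S fa(1) le])
  also have "\<dots> \<le> infsum (\<lambda>x. norm (F x)) UNIV" by (rule fa(2))
  also have "infsum (\<lambda>x. norm (F x)) UNIV = infsum (\<lambda>(s,t). norm (a s) * norm (b t)) UNIV"
    by (simp add: F_def case_prod_unfold norm_mult)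
  also have "\<dots> = l1norm a * l1norm b"
    unfolding l1norm_def
    by (rule prod_infsum) (use F assms in \<open>auto simp: F_def case_prod_unfold norm_mult l1_def\<close>)
  finally show "l1norm (conv a b) \<le> l1norm a * l1norm b" .
qed



lemma triple_summable:
  assumes "a \<in> l1" "b \<in> l1" "c \<in> l1"
  shows "(\<lambda>(r,s,t). a r * b s * c t) summable_on T"
proof -
  have "(\<lambda>x. norm ((\<lambda>(s,t). b s * c t) x)) summable_on UNIV"
    by (rule prod_abs_summable) (use assms in \<open>auto simp: l1_def\<close>)
  then have "(\<lambda>x. norm ((\<lambda>(r,p). a r * (\<lambda>(s,t). b s * c t) p) x)) summable_on UNIV"
    by (intro prod_abs_summable) (use assms in \<open>auto simp: l1_def\<close>)
  then have "(\<lambda>(r,p). a r * (\<lambda>(s,t). b s * c t) p) summable_on UNIV"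
    by (rule abs_summable_summable)
  then have "(\<lambda>(r,s,t). a r * b s * c t) summable_on UNIV"
    by (simp add: case_prod_unfold mult.assoc)
  then show ?thesis by (rule summable_on_subset_banach) auto
qed

lemma Zero_mult[simp]: "cu_mult Zero t = Zero" by simp
lemma mult_Zero[simp]: "cu_mult s Zero = Zero" by (cases s) auto

lemma conv_assoc_L:
  assumes "a \<in> l1" "b \<in> l1" "c \<in> l1" "u \<noteq> Zero"
  shows "conv (conv a b) c u = infsum (\<lambda>(r,s,t). a r * b s * c t) {(r,s,t). cu_mult (cu_mult r s) t = u}"
proof -
  let ?T = "{(r,s,t). cu_mult (cu_mult r s) t = u}"
  let ?S = "Sigma (fib u) (\<lambda>(x,t). fib x)"
  let ?f = "\<lambda>((x,t),(r,s)). a r * b s * c t"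
  define g :: "cu2 \<times> cu2 \<times> cu2 \<Rightarrow> (cu2 \<times> cu2) \<times> (cu2 \<times> cu2)" where "g = (\<lambda>(r,s,t). ((cu_mult r s, t), (r, s)))"
  have bij: "bij_betw g ?T ?S"
    by (rule bij_betwI[where g = "\<lambda>((x,t),(r,s)). (r,s,t)"]) (auto simp: g_def fib_def)
  have fg: "(\<lambda>x. ?f (g x)) = (\<lambda>(r,s,t). a r * b s * c t)" by (auto simp: g_def fun_eq_iff)
  have sumT: "(\<lambda>x. ?f (g x)) summable_on ?T" unfolding fg by (rule triple_summable[OF assms(1-3)])
  have sumS: "?f summable_on ?S" using sumT summable_on_reindex_bij_betw[OF bij] by blast
  have "conv (conv a b) c u = infsum (\<lambda>(x,t). conv a b x * c t) (fib u)"
    using assms(4) by (simp add: conv_fib)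
  also have "\<dots> = infsum (\<lambda>(x,t). infsum (\<lambda>(r,s). a r * b s * c t) (fib x)) (fib u)"
  proof (rule infsum_cong)
    fix p assume "p \<in> fib u"
    obtain x t where p: "p = (x,t)" by (cases p)
    have "x \<noteq> Zero" using \<open>p \<in> fib u\<close> assms(4) by (auto simp: p fib_def)
    then show "(\<lambda>(x,t). conv a b x * c t) p = (\<lambda>(x,t). infsum (\<lambda>(r,s). a r * b s * c t) (fib x)) p"
      by (simp add: p conv_fib infsum_cmult_left'[symmetric] case_prod_unfold)
  qed
  also have "\<dots> = infsum ?f ?S"
    using infsum_Sigma_banach[OF sumS] by (simp add: case_prod_unfold)
  also have "\<dots> = infsum (\<lambda>x. ?f (g x)) ?T" using infsum_reindex_bij_betw[OF bij, of ?f] by (simp only:)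
  finally show ?thesis unfolding fg .
qed

lemma conv_assoc_R:
  assumes "a \<in> l1" "b \<in> l1" "c \<in> l1" "u \<noteq> Zero"
  shows "conv a (conv b c) u = infsum (\<lambda>(r,s,t). a r * b s * c t) {(r,s,t). cu_mult r (cu_mult s t) = u}"
proof -
  let ?T = "{(r,s,t). cu_mult r (cu_mult s t) = u}"
  let ?S = "Sigma (fib u) (\<lambda>(r,y). fib y)"
  let ?f = "\<lambda>((r,y),(s,t)). a r * b s * c t"
  define g :: "cu2 \<times> cu2 \<times> cu2 \<Rightarrow> (cu2 \<times> cu2) \<times> (cu2 \<times> cu2)" where "g = (\<lambda>(r,s,t). ((r, cu_mult s t), (s, t)))"
  have bij: "bij_betw g ?T ?S"
    by (rule bij_betwI[where g = "\<lambda>((r,y),(s,t)). (r,s,t)"]) (auto simp: g_def fib_def)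
  have fg: "(\<lambda>x. ?f (g x)) = (\<lambda>(r,s,t). a r * b s * c t)" by (auto simp: g_def fun_eq_iff)
  have sumT: "(\<lambda>x. ?f (g x)) summable_on ?T" unfolding fg by (rule triple_summable[OF assms(1-3)])
  have sumS: "?f summable_on ?S" using sumT summable_on_reindex_bij_betw[OF bij] by blast
  have "conv a (conv b c) u = infsum (\<lambda>(r,y). a r * conv b c y) (fib u)"
    using assms(4) by (simp add: conv_fib)
  also have "\<dots> = infsum (\<lambda>(r,y). infsum (\<lambda>(s,t). a r * b s * c t) (fib y)) (fib u)"
  proof (rule infsum_cong)
    fix p assume "p \<in> fib u"
    obtain r y where p: "p = (r,y)" by (cases p)
    have "y \<noteq> Zero" using \<open>p \<in> fib u\<close> assms(4) by (auto simp: p fib_def)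
    then show "(\<lambda>(r,y). a r * conv b c y) p = (\<lambda>(r,y). infsum (\<lambda>(s,t). a r * b s * c t) (fib y)) p"
      by (simp add: p conv_fib infsum_cmult_right'[symmetric] case_prod_unfold mult.assoc)
  qed
  also have "\<dots> = infsum ?f ?S"
    using infsum_Sigma_banach[OF sumS] by (simp add: case_prod_unfold)
  also have "\<dots> = infsum (\<lambda>x. ?f (g x)) ?T" using infsum_reindex_bij_betw[OF bij, of ?f] by (simp only:)
  finally show ?thesis unfolding fg .
qed

lemma conv_assoc:
  assumes "a \<in> l1" "b \<in> l1" "c \<in> l1"
  shows "conv (conv a b) c = conv a (conv b c)"
proof
  fix u show "conv (conv a b) c u = conv a (conv b c) u"
  proof (cases "u = Zero")
    case True then show ?thesis by (simp add: conv_def)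
  next
    case False then show ?thesis using conv_assoc_L[OF assms False] conv_assoc_R[OF assms False]
      by (simp add: cu_assoc)
  qed
qed



lemma infsum_zero_pair[simp]: "infsum (\<lambda>(s,t). 0::complex) A = 0"
  by (simp add: case_prod_unfold)

lemma fibprod_summable:
  assumes "a \<in> l1" "b \<in> l1"
  shows "(\<lambda>(s,t). a s * b t) summable_on A"
proof -
  have "(\<lambda>x. norm ((\<lambda>(s,t). a s * b t) x)) summable_on UNIV"
    by (rule prod_abs_summable) (use assms in \<open>auto simp: l1_def\<close>)
  then have "(\<lambda>(s,t). a s * b t) summable_on UNIV" by (rule abs_summable_summable)
  then show ?thesis by (rule summable_on_subset_banach) auto
qed

lemma conv_add_left:
  assumes "f \<in> l1" "g \<in> l1" "h \<in> l1"
  shows "conv (\<lambda>s. f s + g s) h = (\<lambda>u. conv f h u + conv g h u)"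
proof
  fix u
  have "infsum (\<lambda>(s,t). (f s + g s) * h t) (fib u) =
        infsum (\<lambda>(s,t). f s * h t) (fib u) + infsum (\<lambda>(s,t). g s * h t) (fib u)"
    using infsum_add[OF fibprod_summable[OF assms(1,3)] fibprod_summable[OF assms(2,3)]]
    by (simp add: case_prod_unfold distrib_right)
  then show "conv (\<lambda>s. f s + g s) h u = conv f h u + conv g h u" by (simp add: conv_fib)
qed

lemma conv_add_right:
  assumes "f \<in> l1" "g \<in> l1" "h \<in> l1"
  shows "conv h (\<lambda>s. f s + g s) = (\<lambda>u. conv h f u + conv h g u)"
proof
  fix u
  have "infsum (\<lambda>(s,t). h s * (f t + g t)) (fib u) =
        infsum (\<lambda>(s,t). h s * f t) (fib u) + infsum (\<lambda>(s,t). h s * g t) (fib u)"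
    using infsum_add[OF fibprod_summable[OF assms(3,1)] fibprod_summable[OF assms(3,2)]]
    by (simp add: case_prod_unfold distrib_left)
  then show "conv h (\<lambda>s. f s + g s) u = conv h f u + conv h g u" by (simp add: conv_fib)
qed

lemma conv_smult_left: "conv (\<lambda>s. c * f s) h = (\<lambda>u. c * conv f h u)"
proof
  fix u
  have "infsum (\<lambda>(s,t). c * f s * h t) (fib u) = c * infsum (\<lambda>(s,t). f s * h t) (fib u)"
    using infsum_cmult_right'[of c "\<lambda>(s,t). f s * h t" "fib u"] by (simp add: case_prod_unfold mult.assoc)
  then show "conv (\<lambda>s. c * f s) h u = c * conv f h u" by (simp add: conv_fib)
qed

lemma conv_smult_right: "conv h (\<lambda>s. c * f s) = (\<lambda>u. c * conv h f u)"
proof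
  fix u
  have "infsum (\<lambda>(s,t). h s * (c * f t)) (fib u) = c * infsum (\<lambda>(s,t). h s * f t) (fib u)"
    using infsum_cmult_right'[of c "\<lambda>(s,t). h s * f t" "fib u"] by (simp add: case_prod_unfold mult.left_commute)
  then show "conv h (\<lambda>s. c * f s) u = c * conv h f u" by (simp add: conv_fib)
qed

lemma conv_zero_left: "conv (\<lambda>_. 0) h = (\<lambda>_. 0)"
  by (simp add: conv_def fun_eq_iff)
lemma conv_zero_right: "conv h (\<lambda>_. 0) = (\<lambda>_. 0)"
  by (simp add: conv_def fun_eq_iff)

lemma l1_add: "f \<in> l1 \<Longrightarrow> g \<in> l1 \<Longrightarrow> (\<lambda>s. f s + g s) \<in> l1"
proof -
  assume f: "f \<in> l1" and g: "g \<in> l1"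
  have "(\<lambda>s. norm (f s) + norm (g s)) summable_on UNIV"
    using f g unfolding l1_def by (intro summable_on_add) auto
  then have "(\<lambda>s. norm (f s + g s)) summable_on UNIV"
    by (rule summable_on_comparison_test) (auto intro: norm_triangle_ineq)
  then show ?thesis using f g by (simp add: l1_def)
qed

lemma l1_smult: "f \<in> l1 \<Longrightarrow> (\<lambda>s. c * f s) \<in> l1"
  unfolding l1_def by (auto simp: norm_mult intro: summable_on_cmult_right)

lemma l1_zero: "(\<lambda>_. 0) \<in> l1" by (simp add: l1_def)

lemma l1_diff: "f \<in> l1 \<Longrightarrow> g \<in> l1 \<Longrightarrow> (\<lambda>s. f s - g s) \<in> l1"
  using l1_add[of f "\<lambda>s. (-1) * g s"] l1_smult[of g "-1"] by simp

lemma conv_diff_left: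
  assumes "f \<in> l1" "g \<in> l1" "h \<in> l1"
  shows "conv (\<lambda>s. f s - g s) h = (\<lambda>u. conv f h u - conv g h u)"
  using conv_add_left[OF assms(1) l1_smult[OF assms(2), of "-1"] assms(3)] conv_smult_left[of "-1" g h]
  by simp

lemma delta_l1: "delta s \<in> l1"
proof -
  have "(\<lambda>t. norm (delta s t)) summable_on {s}" by simp
  then have "(\<lambda>t. norm (delta s t)) summable_on UNIV"
    by (rule summable_on_cong_neutral[THEN iffD1, rotated -1]) (auto simp: delta_def)
  then show ?thesis by (simp add: l1_def delta_def)
qed

lemma delta_Zero: "delta Zero = (\<lambda>_. 0)" by (simp add: delta_def fun_eq_iff)

lemma infsum_single: "infsum (\<lambda>x. if x = q then c else 0) A = (if q \<in> A then c else (0::complex))"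
proof (cases "q \<in> A")
  case True
  have "infsum (\<lambda>x. if x = q then c else 0) A = infsum (\<lambda>x. if x = q then c else 0) {q}"
    by (rule infsum_cong_neutral) (use True in auto)
  then show ?thesis using True by simp
next
  case False
  then have "infsum (\<lambda>x. if x = q then c else 0) A = infsum (\<lambda>x. 0::complex) A"
    by (intro infsum_cong) auto
  then show ?thesis using False by simp
qed

lemma conv_delta_delta: "conv (delta s) (delta t) = delta (cu_mult s t)"
proof
  fix u
  show "conv (delta s) (delta t) u = delta (cu_mult s t) u"
  proof (cases "u = Zero \<or> s = Zero \<or> t = Zero")
    case True then show ?thesis by (auto simp: conv_def delta_def)
  next
    case False
    have "(\<lambda>(x,y). delta s x * delta t y) = (\<lambda>p. if p = (s,t) then 1 else 0)"
      using False by (auto simp: delta_def fun_eq_iff)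
    then show ?thesis using False by (simp add: conv_fib infsum_single fib_def delta_def)
  qed
qed

lemma conv_delta_left:
  assumes "s \<noteq> Zero"
  shows "conv (delta s) b u = (if u = Zero then 0 else infsum b {t. cu_mult s t = u})"
proof (cases "u = Zero")
  case False
  have "infsum (\<lambda>(x,y). delta s x * b y) (fib u) = infsum (\<lambda>(x,y). delta s x * b y) (Pair s ` {t. cu_mult s t = u})"
    by (rule infsum_cong_neutral) (auto simp: fib_def delta_def)
  also have "\<dots> = infsum b {t. cu_mult s t = u}"
    by (subst infsum_reindex) (auto simp: o_def delta_def assms intro: inj_onI)
  finally show ?thesis using False by (simp add: conv_fib)
qed (simp add: conv_def)

lemma conv_delta_right:
  assumes "t \<noteq> Zero"
  shows "conv a (delta t) u = (if u = Zero then 0 else infsum a {s. cu_mult s t = u})"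
proof (cases "u = Zero")
  case False
  have "infsum (\<lambda>(x,y). a x * delta t y) (fib u) = infsum (\<lambda>(x,y). a x * delta t y) ((\<lambda>s. (s,t)) ` {s. cu_mult s t = u})"
    by (rule infsum_cong_neutral) (auto simp: fib_def delta_def)
  also have "\<dots> = infsum a {s. cu_mult s t = u}"
    by (subst infsum_reindex) (auto simp: o_def delta_def assms intro: inj_onI)
  finally show ?thesis using False by (simp add: conv_fib)
qed (simp add: conv_def)

lemma conv_unit:
  assumes "a Zero = 0"
  shows "conv a (delta cu_e) = a"
proof
  fix u show "conv a (delta cu_e) u = a u"
  proof (cases u)
    case Zero then show ?thesis using assms by (simp add: conv_def)
  next
    case (Elem m n)
    have "cu_mult s cu_e = s" for s by (cases s) (auto simp: cu_e_def)
    then have "{s. cu_mult s cu_e = u} = {u}" by auto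
    then show ?thesis by (simp add: conv_delta_right cu_e_def Elem)
  qed
qed



lemma conv_diff_right:
  assumes "f \<in> l1" "g \<in> l1" "h \<in> l1"
  shows "conv h (\<lambda>s. f s - g s) = (\<lambda>u. conv h f u - conv h g u)"
  using conv_add_right[OF assms(1) l1_smult[OF assms(2), of "-1"] assms(3)] conv_smult_right[of h "-1" g]
  by simp

lemma mult_sL: "cu_mult (Elem [i] []) t = (case t of Zero \<Rightarrow> Zero | Elem m n \<Rightarrow> Elem (i#m) n)"
  by (cases t) auto

lemma mult_sR: "cu_mult t (Elem [] [i]) = (case t of Zero \<Rightarrow> Zero | Elem m n \<Rightarrow> Elem m (i#n))"
  by (cases t) auto

lemma conv_sL1: "conv (delta (Elem [i] [])) b (Elem (x#m) n) = (if x = i then b (Elem m n) else 0)"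
proof -
  have "{t. cu_mult (Elem [i] []) t = Elem (x#m) n} = (if x = i then {Elem m n} else {})"
    apply (rule set_eqI) subgoal for t by (cases t) (auto simp: mult_sL) done
  then show ?thesis by (simp add: conv_delta_left)
qed

lemma conv_sL0: "conv (delta (Elem [i] [])) b (Elem [] n) = 0"
proof -
  have "{t. cu_mult (Elem [i] []) t = Elem [] n} = {}"
    by (auto simp: mult_sL split: cu2.splits)
  then show ?thesis by (simp add: conv_delta_left)
qed

lemma conv_sR1: "conv c (delta (Elem [] [i])) (Elem m (y#n)) = (if y = i then c (Elem m n) else 0)"
proof -
  have "{t. cu_mult t (Elem [] [i]) = Elem m (y#n)} = (if y = i then {Elem m n} else {})"
    apply (rule set_eqI) subgoal for t by (cases t) (auto simp: mult_sR) done
  then show ?thesis by (simp add: conv_delta_right)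
qed

lemma conv_sR0: "conv c (delta (Elem [] [i])) (Elem m []) = 0"
proof -
  have "{t. cu_mult t (Elem [] [i]) = Elem m []} = {}"
    by (auto simp: mult_sR split: cu2.splits)
  then show ?thesis by (simp add: conv_delta_right)
qed

definition bL :: "gen \<Rightarrow> (cu2 \<Rightarrow> complex) \<Rightarrow> cu2 \<Rightarrow> complex" where
  "bL i a = (\<lambda>t. case t of Zero \<Rightarrow> 0 | Elem m n \<Rightarrow> a (Elem (i#m) n))"
definition cR :: "gen \<Rightarrow> (cu2 \<Rightarrow> complex) \<Rightarrow> cu2 \<Rightarrow> complex" where
  "cR i a = (\<lambda>t. case t of Zero \<Rightarrow> 0 | Elem m n \<Rightarrow> if m = [] then a (Elem [] (i#n)) else 0)"

lemma l1_reindex: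
  assumes "a \<in> l1" "inj g"
  shows "(\<lambda>t. norm (a (g t))) summable_on UNIV"
proof -
  have "(\<lambda>x. norm (a x)) summable_on (g ` UNIV)"
    using assms(1) unfolding l1_def by (auto intro: summable_on_subset_banach)
  then show ?thesis using summable_on_reindex[of g UNIV "\<lambda>x. norm (a x)"] assms(2) by (simp add: o_def)
qed

lemma bL_l1: "a \<in> l1 \<Longrightarrow> bL i a \<in> l1"
proof -
  assume a: "a \<in> l1"
  define g where "g t = (case t of Zero \<Rightarrow> Zero | Elem m n \<Rightarrow> Elem (i#m) n)" for t
  have "inj g" unfolding g_def by (rule injI) (auto split: cu2.splits)
  then have S: "(\<lambda>t. norm (a (g t))) summable_on UNIV" by (rule l1_reindex[OF a])
  have "(\<lambda>t. norm (bL i a t)) summable_on UNIV"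
    by (rule summable_on_comparison_test[OF S]) (auto simp: bL_def g_def split: cu2.splits)
  then show ?thesis by (simp add: l1_def bL_def)
qed

lemma cR_l1: "a \<in> l1 \<Longrightarrow> cR i a \<in> l1"
proof -
  assume a: "a \<in> l1"
  define g where "g t = (case t of Zero \<Rightarrow> Zero | Elem m n \<Rightarrow> Elem m (i#n))" for t
  have "inj g" unfolding g_def by (rule injI) (auto split: cu2.splits)
  then have S: "(\<lambda>t. norm (a (g t))) summable_on UNIV" by (rule l1_reindex[OF a])
  have "(\<lambda>t. norm (cR i a t)) summable_on UNIV"
    by (rule summable_on_comparison_test[OF S]) (auto simp: cR_def g_def split: cu2.splits)
  then show ?thesis by (simp add: l1_def cR_def)
qed

lemma decomp:
  assumes "a Zero = 0"
  shows "a = (\<lambda>u. a cu_e * delta cu_e u + conv (delta (Elem [S1] [])) (bL S1 a) u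
     + conv (delta (Elem [S2] [])) (bL S2 a) u + conv (cR S1 a) (delta (Elem [] [S1])) u
     + conv (cR S2 a) (delta (Elem [] [S2])) u)"
proof
  fix u show "a u = a cu_e * delta cu_e u + conv (delta (Elem [S1] [])) (bL S1 a) u
     + conv (delta (Elem [S2] [])) (bL S2 a) u + conv (cR S1 a) (delta (Elem [] [S1])) u
     + conv (cR S2 a) (delta (Elem [] [S2])) u"
  proof (cases u)
    case Zero then show ?thesis using assms by (simp add: conv_def delta_def cu_e_def)
  next
    case (Elem m n)
    show ?thesis
    proof (cases m)
      case Nil
      show ?thesis
      proof (cases n)
        case Nil then show ?thesis using \<open>m = []\<close> Elem by (simp add: conv_sL0 conv_sR0) (simp add: delta_def cu_e_def)
      next
        case (Cons y n')
        then show ?thesis using \<open>m = []\<close> Elem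
          by (cases y) (simp_all add: conv_sL0 conv_sR1 cR_def, simp_all add: delta_def cu_e_def)
      qed
    next
      case (Cons x m')
      show ?thesis
      proof (cases n)
        case Nil then show ?thesis using Cons Elem
          by (cases x) (simp_all add: conv_sL1 conv_sR0 bL_def, simp_all add: delta_def cu_e_def)
      next
        case (Cons y n')
        then show ?thesis using \<open>m = x # m'\<close> Elem
          by (cases x; cases y) (simp_all add: conv_sL1 conv_sR1 bL_def cR_def, simp_all add: delta_def cu_e_def)
      qed
    qed
  qed
qed

lemma f0_l1: "f0 \<in> l1"
  unfolding f0_def by (intro l1_diff delta_l1)

lemma f0_Zero: "f0 Zero = 0" by (simp add: f0_def delta_def)

lemma conv_f0_left: "x \<in> l1 \<Longrightarrow> conv f0 x = (\<lambda>u. conv (delta cu_e) x u - conv (delta (Elem [S1] [S1])) x u - conv (delta (Elem [S2] [S2])) x u)"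
  unfolding f0_def
  using conv_diff_left[of "\<lambda>t. delta cu_e t - delta (Elem [S1] [S1]) t" "delta (Elem [S2] [S2])" x]
    conv_diff_left[of "delta cu_e" "delta (Elem [S1] [S1])" x]
  by (simp add: l1_diff delta_l1)

lemma conv_f0_right: "x \<in> l1 \<Longrightarrow> conv x f0 = (\<lambda>u. conv x (delta cu_e) u - conv x (delta (Elem [S1] [S1])) u - conv x (delta (Elem [S2] [S2])) u)"
  unfolding f0_def
  using conv_diff_right[of "\<lambda>t. delta cu_e t - delta (Elem [S1] [S1]) t" "delta (Elem [S2] [S2])" x]
    conv_diff_right[of "delta cu_e" "delta (Elem [S1] [S1])" x]
  by (simp add: l1_diff delta_l1)

lemma f0_sL: "conv f0 (delta (Elem [i] [])) = (\<lambda>_. 0)"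
  by (cases i) (simp_all add: conv_f0_left delta_l1 conv_delta_delta cu_e_def delta_Zero)

lemma sR_f0: "conv (delta (Elem [] [i])) f0 = (\<lambda>_. 0)"
  by (cases i) (simp_all add: conv_f0_right delta_l1 conv_delta_delta cu_e_def delta_Zero)



context
  fixes \<tau> :: "(cu2 \<Rightarrow> complex) \<Rightarrow> complex"
  assumes bt: "bounded_trace \<tau>"
begin

lemma tau_add: "f \<in> l1 \<Longrightarrow> g \<in> l1 \<Longrightarrow> \<tau> (\<lambda>s. f s + g s) = \<tau> f + \<tau> g"
  using bt by (simp add: bounded_trace_def)
lemma tau_smult: "f \<in> l1 \<Longrightarrow> \<tau> (\<lambda>s. c * f s) = c * \<tau> f"
  using bt by (simp add: bounded_trace_def)
lemma tau_trace: "f \<in> l1 \<Longrightarrow> g \<in> l1 \<Longrightarrow> \<tau> (conv f g) = \<tau> (conv g f)"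
  using bt by (simp add: bounded_trace_def)
lemma tau_bound: "\<exists>C\<ge>0. \<forall>f\<in>l1. norm (\<tau> f) \<le> C * l1norm f"
proof -
  obtain C where C: "\<forall>f\<in>l1. norm (\<tau> f) \<le> C * l1norm f" using bt by (auto simp: bounded_trace_def)
  have "\<forall>f\<in>l1. norm (\<tau> f) \<le> \<bar>C\<bar> * l1norm f"
    using C l1norm_nonneg by (meson abs_ge_self mult_right_mono order_trans)
  then show ?thesis by (intro exI[of _ "\<bar>C\<bar>"]) auto
qed
lemma tau_zero: "\<tau> (\<lambda>_. 0) = 0"
  using tau_smult[OF l1_zero, of 0] by simp
lemma tau_diff: "f \<in> l1 \<Longrightarrow> g \<in> l1 \<Longrightarrow> \<tau> (\<lambda>s. f s - g s) = \<tau> f - \<tau> g"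
  using tau_add[of f "\<lambda>s. (-1) * g s"] tau_smult[of g "-1"] l1_smult[of g "-1"] by simp

lemma tau_f0: "\<tau> f0 = - \<tau> (delta cu_e)"
proof -
  have p: "\<tau> (delta (Elem [i] [i])) = \<tau> (delta cu_e)" for i
  proof -
    have "delta (Elem [i] [i]) = conv (delta (Elem [i] [])) (delta (Elem [] [i]))"
      by (simp add: conv_delta_delta)
    then have "\<tau> (delta (Elem [i] [i])) = \<tau> (conv (delta (Elem [] [i])) (delta (Elem [i] [])))"
      using tau_trace delta_l1 by simp
    also have "\<dots> = \<tau> (delta cu_e)" by (simp add: conv_delta_delta cu_e_def)
    finally show ?thesis .
  qed
  have "\<tau> f0 = \<tau> (delta cu_e) - \<tau> (delta (Elem [S1] [S1])) - \<tau> (delta (Elem [S2] [S2]))"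
    unfolding f0_def
    using tau_diff[of "\<lambda>t. delta cu_e t - delta (Elem [S1] [S1]) t" "delta (Elem [S2] [S2])"]
      tau_diff[of "delta cu_e" "delta (Elem [S1] [S1])"]
    by (simp add: l1_diff delta_l1)
  then show ?thesis using p by simp
qed

lemma tau_conv_add:
  assumes "f \<in> l1" "Y \<in> l1" "Z \<in> l1"
  shows "\<tau> (conv f (\<lambda>u. Y u + Z u)) = \<tau> (conv f Y) + \<tau> (conv f Z)"
  using conv_add_right[OF assms(2,3,1)] tau_add conv_l1(1) assms by simp

lemma f0_kills:
  assumes e0: "\<tau> (delta cu_e) = 0" and x: "x \<in> l1"
  shows "\<tau> (conv f0 x) = 0"
proof -
  have xZ: "x Zero = 0" using x by (simp add: l1_def)
  define X0 where "X0 = (\<lambda>u. x cu_e * delta cu_e u)"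
  define X1 where "X1 = conv (delta (Elem [S1] [])) (bL S1 x)"
  define X2 where "X2 = conv (delta (Elem [S2] [])) (bL S2 x)"
  define X3 where "X3 = conv (cR S1 x) (delta (Elem [] [S1]))"
  define X4 where "X4 = conv (cR S2 x) (delta (Elem [] [S2]))"
  have l: "X0 \<in> l1" "X1 \<in> l1" "X2 \<in> l1" "X3 \<in> l1" "X4 \<in> l1"
    unfolding X0_def X1_def X2_def X3_def X4_def
    by (auto intro!: l1_smult delta_l1 conv_l1(1) bL_l1 cR_l1 x)
  define Y1 where "Y1 = (\<lambda>u. X0 u + X1 u)"
  define Y2 where "Y2 = (\<lambda>u. Y1 u + X2 u)"
  define Y3 where "Y3 = (\<lambda>u. Y2 u + X3 u)"
  have ly: "Y1 \<in> l1" "Y2 \<in> l1" "Y3 \<in> l1" unfolding Y1_def Y2_def Y3_def using l by (auto intro!: l1_add)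
  have xe: "x = (\<lambda>u. Y3 u + X4 u)"
    using decomp[of x, OF xZ] unfolding Y1_def Y2_def Y3_def X0_def X1_def X2_def X3_def X4_def by simp
  have "\<tau> (conv f0 x) = \<tau> (conv f0 X0) + \<tau> (conv f0 X1) + \<tau> (conv f0 X2) + \<tau> (conv f0 X3) + \<tau> (conv f0 X4)"
    unfolding xe using tau_conv_add[OF f0_l1] l ly unfolding Y1_def Y2_def Y3_def by simp
  moreover have "\<tau> (conv f0 X0) = 0"
  proof -
    have "conv f0 X0 = (\<lambda>u. x cu_e * f0 u)"
      unfolding X0_def conv_smult_right conv_unit[of f0, OF f0_Zero] ..
    then show ?thesis using tau_smult[OF f0_l1] tau_f0 e0 by simp
  qed
  moreover have "\<tau> (conv f0 (conv (delta (Elem [i] [])) b)) = 0" if "b \<in> l1" for i b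
    using conv_assoc[OF f0_l1 delta_l1 that, symmetric] by (simp add: f0_sL conv_zero_left tau_zero)
  moreover have "\<tau> (conv f0 (conv c (delta (Elem [] [i])))) = 0" if c: "c \<in> l1" for i c
  proof -
    have "conv f0 (conv c (delta (Elem [] [i]))) = conv (conv f0 c) (delta (Elem [] [i]))"
      using conv_assoc[OF f0_l1 c delta_l1] by simp
    then have "\<tau> (conv f0 (conv c (delta (Elem [] [i])))) = \<tau> (conv (delta (Elem [] [i])) (conv f0 c))"
      using tau_trace[OF conv_l1(1)[OF f0_l1 c] delta_l1] by simp
    also have "\<dots> = \<tau> (conv (conv (delta (Elem [] [i])) f0) c)"
      using conv_assoc[OF delta_l1 f0_l1 c] by simp
    also have "\<dots> = 0" by (simp add: sR_f0 conv_zero_left tau_zero)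
    finally show ?thesis .
  qed
  ultimately show ?thesis unfolding X1_def X2_def X3_def X4_def using bL_l1 cR_l1 x by simp
qed

definition II :: "(cu2 \<Rightarrow> complex) set" where
  "II = {f \<in> l1. \<forall>x\<in>l1. \<tau> (conv f x) = 0}"

lemma small_le_zero:
  fixes y M :: real
  assumes "M > 0" "\<And>e. e > 0 \<Longrightarrow> y \<le> e * M"
  shows "y \<le> 0"
proof (rule ccontr)
  assume "\<not> y \<le> 0"
  then have "y > 0" by simp
  have "y \<le> (y / (2 * M)) * M" using assms(2)[of "y / (2*M)"] \<open>y > 0\<close> assms(1) by simp
  also have "\<dots> = y / 2" using assms(1) by (simp add: field_simps)
  finally show False using \<open>y > 0\<close> by simp
qed

lemma II_add: "f \<in> II \<Longrightarrow> g \<in> II \<Longrightarrow> (\<lambda>s. f s + g s) \<in> II"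
  by (auto simp: II_def l1_add conv_add_left tau_add conv_l1)

lemma II_smult: "f \<in> II \<Longrightarrow> (\<lambda>s. c * f s) \<in> II"
  by (auto simp: II_def l1_smult conv_smult_left tau_smult conv_l1)

lemma II_convL:
  assumes a: "a \<in> l1" and f: "f \<in> II" shows "conv a f \<in> II"
proof -
  have fl: "f \<in> l1" using f by (simp add: II_def)
  show ?thesis unfolding II_def
  proof (intro CollectI conjI ballI)
    show "conv a f \<in> l1" using a fl by (rule conv_l1)
    fix x assume x: "x \<in> l1"
    have "\<tau> (conv (conv a f) x) = \<tau> (conv a (conv f x))" using conv_assoc[OF a fl x] by simp
    also have "\<dots> = \<tau> (conv (conv f x) a)" using tau_trace[OF a conv_l1(1)[OF fl x]] .
    also have "\<dots> = \<tau> (conv f (conv x a))" using conv_assoc[OF fl x a] by simp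
    also have "\<dots> = 0" using f conv_l1(1)[OF x a] by (simp add: II_def)
    finally show "\<tau> (conv (conv a f) x) = 0" .
  qed
qed

lemma II_convR:
  assumes a: "a \<in> l1" and f: "f \<in> II" shows "conv f a \<in> II"
proof -
  have fl: "f \<in> l1" using f by (simp add: II_def)
  show ?thesis unfolding II_def
  proof (intro CollectI conjI ballI)
    show "conv f a \<in> l1" using fl a by (rule conv_l1)
    fix x assume x: "x \<in> l1"
    have "\<tau> (conv (conv f a) x) = \<tau> (conv f (conv a x))" using conv_assoc[OF fl a x] by simp
    also have "\<dots> = 0" using f conv_l1(1)[OF a x] by (simp add: II_def)
    finally show "\<tau> (conv (conv f a) x) = 0" .
  qed
qed

lemma II_closure:
  assumes f: "f \<in> l1" and ap: "\<forall>\<epsilon>>0. \<exists>g\<in>II. l1norm (\<lambda>s. f s - g s) < \<epsilon>"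
  shows "f \<in> II"
proof -
  obtain C where C: "C \<ge> 0" "\<forall>h\<in>l1. norm (\<tau> h) \<le> C * l1norm h" using tau_bound by blast
  show "f \<in> II" unfolding II_def
  proof (intro CollectI conjI ballI)
    show "f \<in> l1" by fact
    fix x assume x: "x \<in> l1"
    have "norm (\<tau> (conv f x)) \<le> 0"
    proof (rule small_le_zero[of "C * l1norm x + 1"])
      show "C * l1norm x + 1 > 0" using mult_nonneg_nonneg[OF C(1) l1norm_nonneg[of x]] by linarith
      fix e :: real assume e: "e > 0"
      obtain g where g: "g \<in> II" "l1norm (\<lambda>s. f s - g s) < e" using ap e by blast
      have gl: "g \<in> l1" using g by (simp add: II_def)
      have dl: "(\<lambda>s. f s - g s) \<in> l1" using f gl by (rule l1_diff)
      have "conv f x = conv (\<lambda>s. (f s - g s) + g s) x" by simp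
      also have "\<dots> = (\<lambda>u. conv (\<lambda>s. f s - g s) x u + conv g x u)"
        by (rule conv_add_left[OF dl gl x])
      finally have "\<tau> (conv f x) = \<tau> (conv (\<lambda>s. f s - g s) x) + \<tau> (conv g x)"
        using tau_add conv_l1(1) dl gl x by simp
      also have "\<tau> (conv g x) = 0" using g x by (simp add: II_def)
      finally have "norm (\<tau> (conv f x)) = norm (\<tau> (conv (\<lambda>s. f s - g s) x))" by simp
      also have "\<dots> \<le> C * l1norm (conv (\<lambda>s. f s - g s) x)" using C(2) conv_l1(1)[OF dl x] by blast
      also have "\<dots> \<le> C * (l1norm (\<lambda>s. f s - g s) * l1norm x)"
        using conv_l1(2)[OF dl x] C(1) by (rule mult_left_mono)
      also have "\<dots> \<le> C * (e * l1norm x)"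
        using g(2) C(1) l1norm_nonneg[of x] by (intro mult_left_mono mult_right_mono) auto
      also have "\<dots> \<le> e * (C * l1norm x + 1)" using e by (simp add: algebra_simps)
      finally show "norm (\<tau> (conv f x)) \<le> e * (C * l1norm x + 1)" .
    qed
    then show "\<tau> (conv f x) = 0" by simp
  qed
qed

lemma II_closed: "closed_ideal II"
  unfolding closed_ideal_def
  using II_add II_smult II_convL II_convR II_closure
  by (auto simp: II_def l1_zero conv_zero_left tau_zero)

lemma f0_II: "\<tau> (delta cu_e) = 0 \<Longrightarrow> f0 \<in> II"
  using f0_kills f0_l1 by (simp add: II_def)

lemma II_ker: "f \<in> II \<Longrightarrow> \<tau> f = 0"
proof -
  assume f: "f \<in> II"
  then have "f \<in> l1" by (simp add: II_def)
  then have "conv f (delta cu_e) = f" by (intro conv_unit) (simp add: l1_def)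
  moreover have "\<tau> (conv f (delta cu_e)) = 0" using f delta_l1 by (simp add: II_def)
  ultimately show ?thesis by simp
qed

end



lemma f0_J: "f0 \<in> J" by (simp add: J_def)

lemma J_add: "x \<in> J \<Longrightarrow> y \<in> J \<Longrightarrow> (\<lambda>s. x s + y s) \<in> J"
  by (auto simp: J_def closed_ideal_def)

lemma J_smult: "x \<in> J \<Longrightarrow> (\<lambda>s. c * x s) \<in> J"
  by (auto simp: J_def closed_ideal_def)

lemma qmap_zero: "qmap (\<lambda>_. 0) = J"
  by (auto simp: qmap_def)

lemma qmap_f0: "qmap f0 = J"
proof
  show "qmap f0 \<subseteq> J" using J_add[OF f0_J] by (auto simp: qmap_def)
  show "J \<subseteq> qmap f0"
  proof
    fix j assume j: "j \<in> J"
    have "(\<lambda>s. j s + (-1) * f0 s) \<in> J" using J_add[OF j J_smult[OF f0_J, of "-1"]] by simp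
    moreover have "j = (\<lambda>s. f0 s + (\<lambda>s. j s + (-1) * f0 s) s)" by simp
    ultimately show "j \<in> qmap f0" unfolding qmap_def by (intro CollectI exI[of _ "\<lambda>s. j s + (-1) * f0 s"]) simp
  qed
qed

theorem lemma4p2:
  assumes "bounded_trace \<tau>"
  shows "(J \<subseteq> {f \<in> l1. \<tau> f = 0} \<longleftrightarrow> \<tau> (delta cu_e) = 0)
       \<and> (drops \<tau> \<longleftrightarrow> \<tau> (delta cu_e) = 0)"
proof -
  note bt = assms
  have imp1: "\<tau> (delta cu_e) = 0" if "\<tau> f0 = 0"
    using tau_f0[OF bt] that by simp
  have JK: "J \<subseteq> {f \<in> l1. \<tau> f = 0}" if e0: "\<tau> (delta cu_e) = 0"
  proof -
    have "J \<subseteq> II \<tau>" unfolding J_def using II_closed[OF bt] f0_II[OF bt e0] by blast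
    moreover have "II \<tau> \<subseteq> {f \<in> l1. \<tau> f = 0}" using II_ker[OF bt] by (auto simp: II_def[OF bt])
    ultimately show ?thesis by blast
  qed
  have part1: "J \<subseteq> {f \<in> l1. \<tau> f = 0} \<longleftrightarrow> \<tau> (delta cu_e) = 0"
    using JK imp1 f0_J by blast
  have part2: "drops \<tau> \<longleftrightarrow> \<tau> (delta cu_e) = 0"
  proof
    assume "drops \<tau>"
    then obtain \<tau>' where t: "\<forall>f\<in>l1. \<tau>' (qmap f) = \<tau> f" by (auto simp: drops_def)
    have "\<tau> f0 = \<tau>' (qmap f0)" using t f0_l1 by simp
    also have "\<dots> = \<tau>' (qmap (\<lambda>_. 0))" by (simp add: qmap_f0 qmap_zero)
    also have "\<dots> = \<tau> (\<lambda>_. 0)" using t l1_zero by simp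
    also have "\<dots> = 0" by (rule tau_zero[OF bt])
    finally show "\<tau> (delta cu_e) = 0" by (rule imp1)
  next
    assume e0: "\<tau> (delta cu_e) = 0"
    have JK': "J \<subseteq> {f \<in> l1. \<tau> f = 0}" by (rule JK[OF e0])
    define \<tau>' where "\<tau>' X = \<tau> (SOME f. f \<in> l1 \<and> qmap f = X)" for X
    have "\<forall>f\<in>l1. \<tau>' (qmap f) = \<tau> f"
    proof
      fix f assume f: "f \<in> l1"
      define g where "g = (SOME g. g \<in> l1 \<and> qmap g = qmap f)"
      have g: "g \<in> l1 \<and> qmap g = qmap f" unfolding g_def by (rule someI[of _ f]) (simp add: f)
      have "f \<in> qmap f"
      proof -
        have "(\<lambda>_. 0) \<in> J" using J_smult[OF f0_J, of 0] by simp
        then show ?thesis unfolding qmap_def by (intro CollectI exI[of _ "\<lambda>_. 0"]) simp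
      qed
      then have "f \<in> qmap g" using g by simp
      then obtain j where j: "j \<in> J" "f = (\<lambda>s. g s + j s)" by (auto simp: qmap_def)
      have jl: "j \<in> l1" "\<tau> j = 0" using j(1) JK' by auto
      have "\<tau> f = \<tau> g + \<tau> j" using j(2) tau_add[OF bt] g jl by simp
      then show "\<tau>' (qmap f) = \<tau> f" using jl by (simp add: \<tau>'_def g_def)
    qed
    then show "drops \<tau>" unfolding drops_def by blast
  qed
  show ?thesis using part1 part2 by blast
qed


end
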